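(* Let $a,b$ be positive integers. A positive integer $p$ is the period of some position of the parallel chip-firing game on $K_{a,b}$ if and only if $p\in\{i: 1\le i\le\min(a,b)\}\cup\{2i: 1\le i\le\min(a,b)\}$.
   Context: Parallel chip-firing game: a position $\sigma$ assigns a nonnegative integer to each vertex; in each step every vertex $v$ with $\sigma(v)\ge\deg(v)$ simultaneously sends one chip to each neighbor. $K_{a,b}$ is the complete bipartite graph with sides of sizes $a$ and $b$. The period $p(\sigma)$ is the least positive integer $p$ such that $U^{t+p}\sigma=U^t\sigma$ for all sufficiently large $t$, where $U$ is the step operator. *)

theory Defs
  imports Main
begin

text \<open>A finite simple graph is given by a vertex set V and a symmetric irreflexive
  adjacency relation E (only its restriction to V matters).\<close>

definition deg :: "'v set \<Rightarrow> ('v \<Rightarrow> 'v \<Rightarrow> bool) \<Rightarrow> 'v \<Rightarrow> nat" where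
  "deg V E v = card {u \<in> V. E v u}"

definition cf_step :: "'v set \<Rightarrow> ('v \<Rightarrow> 'v \<Rightarrow> bool) \<Rightarrow> ('v \<Rightarrow> nat) \<Rightarrow> ('v \<Rightarrow> nat)" where
  "cf_step V E \<sigma> = (\<lambda>v. if v \<in> V then
      \<sigma> v - (if deg V E v \<le> \<sigma> v then deg V E v else 0)
        + card {u \<in> V. E u v \<and> deg V E u \<le> \<sigma> u}
    else \<sigma> v)"

definition eventual_period :: "'v set \<Rightarrow> ('v \<Rightarrow> 'v \<Rightarrow> bool) \<Rightarrow> ('v \<Rightarrow> nat) \<Rightarrow> nat \<Rightarrow> bool" where
  "eventual_period V E \<sigma> p \<longleftrightarrow> 0 < p \<and>
     (\<exists>t0. \<forall>t\<ge>t0. (cf_step V E ^^ (t + p)) \<sigma> = (cf_step V E ^^ t) \<sigma>)"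

definition is_period :: "'v set \<Rightarrow> ('v \<Rightarrow> 'v \<Rightarrow> bool) \<Rightarrow> ('v \<Rightarrow> nat) \<Rightarrow> nat \<Rightarrow> bool" where
  "is_period V E \<sigma> p \<longleftrightarrow> eventual_period V E \<sigma> p \<and>
     (\<forall>q. 0 < q \<and> q < p \<longrightarrow> \<not> eventual_period V E \<sigma> q)"

definition Kab_V :: "nat \<Rightarrow> nat \<Rightarrow> (nat + nat) set" where
  "Kab_V a b = Inl ` {..<a} \<union> Inr ` {..<b}"

definition Kab_E :: "(nat + nat) \<Rightarrow> (nat + nat) \<Rightarrow> bool" where
  "Kab_E u v \<longleftrightarrow> isl u \<noteq> isl v"

end

theory Submission
  imports Defs
begin



lemma shift_gen:
  fixes F :: "int \<Rightarrow> int"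
  assumes sh: "\<And>z. F (z + c) = F z + e"
  shows "F (z + m * c) = F z + m * e"
proof (induction m rule: int_induct[where k=0])
  case base then show ?case by simp
next
  case (step1 i)
  have "F (z + (i + 1) * c) = F ((z + i * c) + c)" by (simp add: algebra_simps)
  also have "\<dots> = F (z + i * c) + e" by (rule sh)
  also have "\<dots> = F z + (i+1) * e" using step1 by (simp add: algebra_simps)
  finally show ?case .
next
  case (step2 i)
  have "F z + i * e = F (z + (i - 1) * c + c)" using step2 by (simp add: algebra_simps)
  also have "\<dots> = F (z + (i - 1) * c) + e" using sh by simp
  finally show ?case by (simp add: algebra_simps)
qed

lemma funpow_shift:
  fixes G :: "int \<Rightarrow> int"
  assumes sh: "\<And>z. G (z + b) = G z + b"
  shows "(G ^^ n) (z + m * b) = (G ^^ n) z + m * b"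
proof -
  have G1: "G (z + m * b) = G z + m * b" for z m
  proof (induction m rule: int_induct[where k=0])
    case base then show ?case by simp
  next
    case (step1 i)
    have "G (z + (i + 1) * b) = G ((z + i * b) + b)" by (simp add: algebra_simps)
    also have "\<dots> = G (z + i * b) + b" by (rule sh)
    also have "\<dots> = G z + (i+1) * b" using step1 by (simp add: algebra_simps)
    finally show ?case .
  next
    case (step2 i)
    have "G z + i * b = G (z + (i - 1) * b + b)" using step2 by (simp add: algebra_simps)
    also have "\<dots> = G (z + (i - 1) * b) + b" using sh by simp
    finally show ?case by (simp add: algebra_simps)
  qed
  show ?thesis
    by (induction n arbitrary: z) (simp_all add: G1)
qed

lemma funpow_mono_int:
  fixes G :: "int \<Rightarrow> int"
  assumes "mono G"
  shows "mono (G ^^ n)"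
proof (induction n)
  case 0 then show ?case by (simp add: mono_def)
next
  case (Suc n) then show ?case using assms by (simp add: mono_def)
qed

lemma reduction:
  fixes G :: "int \<Rightarrow> int"
  assumes mo: "mono G" and sh: "\<And>z. G (z + b) = G z + b"
    and g: "g > 0" and eq: "(G ^^ (g * k0)) u = u + (int g * m0) * b"
  shows "(G ^^ k0) u = u + m0 * b"
proof -
  let ?H = "G ^^ k0"
  have Hm: "mono ?H" by (rule funpow_mono_int[OF mo])
  have Hs: "?H (z + m * b) = ?H z + m * b" for z m by (rule funpow_shift[of G b, OF sh])
  have pow: "(?H ^^ j) = G ^^ (j * k0)" for j by (simp add: funpow_mult mult.commute)
  show ?thesis
  proof (rule ccontr)
    assume ne: "?H u \<noteq> u + m0 * b"
    show False
    proof (cases "?H u > u + m0 * b")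
      case True
      have "(?H ^^ Suc j) u > u + int (Suc j) * m0 * b" for j
      proof (induction j)
        case 0 then show ?case using True by simp
      next
        case (Suc j)
        have "(?H ^^ Suc (Suc j)) u = ?H ((?H ^^ Suc j) u)" by simp
        also have "\<dots> \<ge> ?H (u + (int (Suc j) * m0) * b)"
          using Suc monoD[OF Hm, of "u + (int (Suc j) * m0) * b" "(?H ^^ Suc j) u"] by (simp add: algebra_simps)
        also have "?H (u + (int (Suc j) * m0) * b) = ?H u + (int (Suc j) * m0) * b" by (rule Hs)
        finally show ?case using True by (simp add: algebra_simps)
      qed
      from this[of "g - 1"] g eq pow[of g] show False by (simp add: algebra_simps)
    next
      case False
      then have lt: "?H u < u + m0 * b" using ne by simp
      have "(?H ^^ Suc j) u < u + int (Suc j) * m0 * b" for j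
      proof (induction j)
        case 0 then show ?case using lt by simp
      next
        case (Suc j)
        have "(?H ^^ Suc (Suc j)) u = ?H ((?H ^^ Suc j) u)" by simp
        also have "\<dots> \<le> ?H (u + (int (Suc j) * m0) * b)"
          using Suc monoD[OF Hm, of "(?H ^^ Suc j) u" "u + (int (Suc j) * m0) * b"] by (simp add: algebra_simps)
        also have "?H (u + (int (Suc j) * m0) * b) = ?H u + (int (Suc j) * m0) * b" by (rule Hs)
        finally show ?case using lt by (simp add: algebra_simps)
      qed
      from this[of "g - 1"] g eq pow[of g] show False by (simp add: algebra_simps)
    qed
  qed
qed

lemma rotation_eq:
  fixes G :: "int \<Rightarrow> int"
  assumes mo: "mono G" and sh: "\<And>z. G (z + b) = G z + b" and b: "b > 0"
    and eu: "(G ^^ N) u = u + M1 * b" and ew: "(G ^^ N) w = w + M2 * b"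
  shows "M1 = M2"
proof -
  have Hm: "mono (G ^^ (2*N))" by (rule funpow_mono_int[OF mo])
  have pow2: "(G ^^ (2*N)) z = ((G ^^ N) ^^ 2) z" for z by (simp add: funpow_mult mult.commute)
  have "(G ^^ (2*N)) u = u + 2 * M1 * b"
    using pow2[of u] eu funpow_shift[of G b, OF sh, of N u M1] by (simp add: numeral_2_eq_2 algebra_simps)
  moreover have "(G ^^ (2*N)) w = w + 2 * M2 * b"
    using pow2[of w] ew funpow_shift[of G b, OF sh, of N w M2] by (simp add: numeral_2_eq_2 algebra_simps)
  moreover define j where "j = (w - u) div b"
  have j1: "u + j * b \<le> w" and j2: "w < u + (j+1) * b"
  proof -
    have "w - u = b * j + (w - u) mod b" unfolding j_def by simp
    moreover have "0 \<le> (w - u) mod b" "(w - u) mod b < b" using b by simp_all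
    ultimately show "u + j * b \<le> w" "w < u + (j+1) * b" by (simp_all add: algebra_simps)
  qed
  have "(G ^^ (2*N)) (u + j * b) \<le> (G ^^ (2*N)) w" using monoD[OF Hm j1] .
  moreover have "(G ^^ (2*N)) w \<le> (G ^^ (2*N)) (u + (j+1) * b)" using monoD[OF Hm] j2 by simp
  ultimately have A: "u + 2 * M1 * b + j * b \<le> w + 2 * M2 * b"
     and B: "w + 2 * M2 * b \<le> u + 2 * M1 * b + (j+1) * b"
    using funpow_shift[of G b, OF sh, of "2*N" u j] funpow_shift[of G b, OF sh, of "2*N" u "j+1"] by (simp_all add: algebra_simps)
  from A j2 have "2 * (M1 - M2) * b < b" by (simp add: algebra_simps)
  then have c1: "2 * (M1 - M2) < 1" using b by (simp add: mult_less_cancel_right)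
  from B j1 have "2 * (M2 - M1) * b \<le> b" by (simp add: algebra_simps)
  then have c2: "2 * (M2 - M1) \<le> 1" using b by (simp add: mult_le_cancel_right1)
  from c1 c2 show ?thesis by presburger
qed

lemma iter_shift:
  fixes H :: "int \<Rightarrow> int"
  assumes sh: "\<And>z. H (z + b) = H z + b" and e: "H u = u + m * b"
  shows "(H ^^ n) u = u + int n * m * b"
proof (induction n)
  case 0 then show ?case by simp
next
  case (Suc n)
  have "(H ^^ Suc n) u = H ((H ^^ n) u)" by simp
  also have "\<dots> = H (u + (int n * m) * b)" using Suc by simp
  also have "\<dots> = H u + (int n * m) * b" using funpow_shift[of H b 1 u "int n * m", OF sh] by simp
  finally show ?case using e by (simp add: algebra_simps)
qed

lemma orbit_bound:
  fixes G FA FB :: "int \<Rightarrow> int" and a b :: nat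
  assumes mA: "mono FA" and mB: "mono FB"
    and sA: "\<And>z. FA (z + int b) = FA z + int a"
    and sB: "\<And>z. FB (z + int a) = FB z + int b"
    and a: "a > 0" and b: "b > 0" and Gdef: "\<And>z. G z = FB (FA z)"
    and K: "K > 0" and eu: "(G ^^ K) u = u + M1 * int b" and ew: "(G ^^ K) w = w + M2 * int b"
  shows "\<exists>k m. 0 < k \<and> k \<le> a \<and> k \<le> b \<and> (G ^^ k) u = u + m * int b \<and> (G ^^ k) w = w + m * int b"
proof -
  have mo: "mono G" using mA mB unfolding mono_def Gdef by auto
  have sh: "G (z + int b) = G z + int b" for z
    using sA sB Gdef by simp
  have shB: "FB (z + m * int a) = FB z + m * int b" for z m
    using shift_gen[of FB "int a" "int b", OF sB] by simp
  define Q where "Q k \<longleftrightarrow> 0 < k \<and> (\<exists>m. (G ^^ k) u = u + m * int b)" for k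
  have QK: "Q K" using K eu unfolding Q_def by blast
  define k1 where "k1 = (LEAST k. Q k)"
  have Qk1: "Q k1" unfolding k1_def by (rule LeastI[of Q K, OF QK])
  have minim: "\<not> Q j" if "j < k1" for j using that not_less_Least unfolding k1_def by blast
  from Qk1 obtain m1 where k1pos: "0 < k1" and em1: "(G ^^ k1) u = u + m1 * int b" unfolding Q_def by blast
  have shn: "(G ^^ n) (z + int b) = (G ^^ n) z + int b" for n z
    using funpow_shift[of G "int b" n z 1, OF sh] by simp
  have uKk: "(G ^^ (K * k1)) u = u + int K * m1 * int b"
    using iter_shift[of "G ^^ k1" "int b" u m1 K, OF shn] em1
    by (simp add: funpow_mult mult.commute)
  have wKk: "(G ^^ (K * k1)) w = w + int k1 * M2 * int b"
    using iter_shift[of "G ^^ K" "int b" w M2 k1, OF shn] ew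
    by (simp add: funpow_mult)
  have "int K * m1 = int k1 * M2"
    using rotation_eq[of G "int b" "K * k1" u "int K * m1" w "int k1 * M2"] mo sh b uKk wKk by simp
  then have "(G ^^ (K * k1)) w = w + (int K * m1) * int b" using wKk by simp
  then have ewk: "(G ^^ k1) w = w + m1 * int b"
    using reduction[of G "int b" K k1 w m1] mo sh K by simp
  have dist: "False" if ij: "i < j" "j < k1" and eq: "(G ^^ j) u = (G ^^ i) u + n * int b" for i j n
  proof -
    have ar: "(k1 - i) + j = (j - i) + k1" using ij by simp
    have "(G ^^ (k1 - i)) ((G ^^ j) u) = (G ^^ ((k1 - i) + j)) u" by (simp add: funpow_add)
    also have "\<dots> = (G ^^ ((j - i) + k1)) u" by (simp only: ar)
    also have "\<dots> = (G ^^ (j - i)) ((G ^^ k1) u)" by (simp add: funpow_add)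
    also have "\<dots> = (G ^^ (j - i)) u + m1 * int b" using em1 funpow_shift[of G "int b", OF sh] by simp
    finally have 1: "(G ^^ (k1 - i)) ((G ^^ j) u) = (G ^^ (j - i)) u + m1 * int b" .
    have "(G ^^ (k1 - i)) ((G ^^ j) u) = (G ^^ (k1 - i)) ((G ^^ i) u) + n * int b"
      using eq funpow_shift[of G "int b", OF sh] by simp
    also have "(G ^^ (k1 - i)) ((G ^^ i) u) = (G ^^ k1) u"
    proof -
      have "(G ^^ (k1 - i)) ((G ^^ i) u) = (G ^^ ((k1 - i) + i)) u" by (simp add: funpow_add)
      also have "(k1 - i) + i = k1" using ij by simp
      finally show ?thesis .
    qed
    finally have "(G ^^ (j - i)) u = u + n * int b" using 1 em1 by simp
    then have "Q (j - i)" unfolding Q_def using ij by auto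
    moreover have "j - i < k1" using ij by simp
    ultimately show False using minim by blast
  qed
  have inj1: "inj_on (\<lambda>i. (G ^^ i) u mod int b) {..<k1}"
  proof (rule inj_onI)
    fix i j assume i: "i \<in> {..<k1}" and j: "j \<in> {..<k1}" and e: "(G ^^ i) u mod int b = (G ^^ j) u mod int b"
    have ex: "\<exists>n. (G ^^ y) u = (G ^^ x) u + n * int b" if "(G ^^ x) u mod int b = (G ^^ y) u mod int b" for x y
    proof -
      have "((G ^^ y) u - (G ^^ x) u) mod int b = 0" using that by (simp add: mod_diff_eq[symmetric])
      then have "int b dvd ((G ^^ y) u - (G ^^ x) u)" by (simp add: mod_eq_0_iff_dvd)
      then obtain n where "(G ^^ y) u - (G ^^ x) u = int b * n" by (auto simp: dvd_def)
      then show ?thesis by (intro exI[of _ n]) (simp add: algebra_simps)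
    qed
    show "i = j"
    proof (rule ccontr)
      assume "i \<noteq> j"
      then consider "i < j" | "j < i" by linarith
      then show False
      proof cases
        case 1 then show False using ex[OF e] dist j by blast
      next
        case 2 then show False using ex[OF e[symmetric]] dist i by blast
      qed
    qed
  qed
  have kb: "k1 \<le> b"
  proof -
    have "card {..<k1} \<le> card {0..<int b}"
      by (rule card_inj_on_le[OF inj1]) (auto simp: b)
    then show ?thesis by simp
  qed
  have inj2: "inj_on (\<lambda>i. FA ((G ^^ i) u) mod int a) {..<k1}"
  proof (rule inj_onI)
    fix i j assume i: "i \<in> {..<k1}" and j: "j \<in> {..<k1}" and e: "FA ((G ^^ i) u) mod int a = FA ((G ^^ j) u) mod int a"
    have ex: "False" if xy: "x < y" "y < k1" and e: "FA ((G ^^ x) u) mod int a = FA ((G ^^ y) u) mod int a" for x y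
    proof -
      have "(FA ((G ^^ y) u) - FA ((G ^^ x) u)) mod int a = 0" using e by (simp add: mod_diff_eq[symmetric])
      then have "int a dvd (FA ((G ^^ y) u) - FA ((G ^^ x) u))" by (simp add: mod_eq_0_iff_dvd)
      then obtain n where "FA ((G ^^ y) u) - FA ((G ^^ x) u) = int a * n" by (auto simp: dvd_def)
      then have n: "FA ((G ^^ y) u) = FA ((G ^^ x) u) + n * int a" by (simp add: algebra_simps)
      have "(G ^^ Suc y) u = (G ^^ Suc x) u + n * int b"
        using n shB by (simp add: Gdef)
      show False
      proof (cases "Suc y < k1")
        case True then show False using dist[of "Suc x" "Suc y" n] xy \<open>(G ^^ Suc y) u = _\<close> by simp
      next
        case False
        then have "Suc y = k1" using xy by simp
        then have "(G ^^ Suc x) u = u + (m1 - n) * int b"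
          using \<open>(G ^^ Suc y) u = _\<close> em1 by (simp add: algebra_simps)
        then have "Q (Suc x)" unfolding Q_def by blast
        moreover have "Suc x < k1" using xy \<open>Suc y = k1\<close> by simp
        ultimately show False using minim by blast
      qed
    qed
    show "i = j"
    proof (rule ccontr)
      assume "i \<noteq> j"
      then consider "i < j" | "j < i" by linarith
      then show False
      proof cases
        case 1 then show False using ex e j by blast
      next
        case 2 then show False using ex e[symmetric] i by blast
      qed
    qed
  qed
  have ka: "k1 \<le> a"
  proof -
    have "card {..<k1} \<le> card {0..<int a}"
      by (rule card_inj_on_le[OF inj2]) (auto simp: a)
    then show ?thesis by simp
  qed
  show ?thesis using k1pos ka kb em1 ewk by blast
qed




definition Fside :: "nat \<Rightarrow> nat \<Rightarrow> (nat \<Rightarrow> int) \<Rightarrow> int \<Rightarrow> int \<Rightarrow> int" where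
  "Fside n d c x0 z = x0 + (\<Sum>i<n. (c i + z) div int d)"

lemma Fside_mono: "d > 0 \<Longrightarrow> mono (Fside n d c x0)"
  unfolding mono_def Fside_def by (auto intro!: sum_mono zdiv_mono1)

lemma Fside_shift: "d > 0 \<Longrightarrow> Fside n d c x0 (z + int d) = Fside n d c x0 z + int n"
proof -
  assume d: "d > 0"
  have "(c i + (z + int d)) div int d = (c i + z) div int d + 1" for i
    using d by (simp add: add.assoc[symmetric] div_add_self2)
  then show ?thesis unfolding Fside_def by (simp add: sum.distrib)
qed

lemma wrap_count:
  fixes z y d :: int
  assumes d: "d > 0" and y: "0 \<le> y" "y \<le> d"
  shows "(if d \<le> z mod d + y then 1 else 0) = (z + y) div d - z div d"
proof -
  define r where "r = z mod d"
  define q where "q = z div d"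
  have r: "0 \<le> r" "r < d" using d by (simp_all add: r_def)
  have z: "z + y = (r + y) + q * d" by (simp add: r_def q_def algebra_simps)
  have 1: "(z + y) div d = q + (r + y) div d"
    unfolding z using d by (simp add: div_mult_self1)
  have 2: "(r + y) div d = (if d \<le> r + y then 1 else 0)"
  proof (cases "d \<le> r + y")
    case True
    have "(r + y) div d = ((r + y - d) + 1 * d) div d" by simp
    also have "\<dots> = 1 + (r + y - d) div d" using d by (simp only: div_mult_self1)
    also have "(r + y - d) div d = 0" using True r y by (simp add: div_pos_pos_trivial)
    finally show ?thesis using True by simp
  next
    case False then show ?thesis using r y by (simp add: div_pos_pos_trivial)
  qed
  show ?thesis using 1 2 by (simp add: r_def q_def)
qed

lemma side_D:
  fixes \<alpha> :: "nat \<Rightarrow> nat \<Rightarrow> nat" and Yin Xout :: "nat \<Rightarrow> nat" and n d :: nat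
  assumes d: "d > 0" and Yle: "\<And>t. Yin t \<le> d"
    and step: "\<And>i t. i < n \<Longrightarrow> \<alpha> i (Suc t) = \<alpha> i t mod d + Yin t"
    and Xdef: "\<And>t. Xout t = card {i. i < n \<and> d \<le> \<alpha> i t}"
  defines "D \<equiv> \<lambda>t. (\<Sum>s<t. int (Yin s))"
  defines "c \<equiv> \<lambda>i. int (\<alpha> i 0 mod d)"
  shows side_res: "\<And>i t. i < n \<Longrightarrow> int (\<alpha> i t mod d) = (c i + D t) mod int d"
    and side_val: "\<And>i t. i < n \<Longrightarrow> int (\<alpha> i (Suc t)) = (c i + D t) mod int d + (D (Suc t) - D t)"
    and side_F: "\<And>t. (\<Sum>s<Suc t. int (Xout s)) = Fside n d c (int (Xout 0)) (D t)"
proof -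
  show res: "int (\<alpha> i t mod d) = (c i + D t) mod int d" if "i < n" for i t
  proof (induction t)
    case 0 then show ?case by (simp add: c_def D_def zmod_int)
  next
    case (Suc t)
    have "int (\<alpha> i (Suc t) mod d) = (int (\<alpha> i t mod d) + int (Yin t)) mod int d"
      using step[OF that] by (simp add: zmod_int)
    also have "\<dots> = ((c i + D t) mod int d + int (Yin t)) mod int d" using Suc by simp
    also have "\<dots> = (c i + D (Suc t)) mod int d" by (simp add: D_def mod_add_left_eq add.assoc)
    finally show ?case .
  qed
  show val: "int (\<alpha> i (Suc t)) = (c i + D t) mod int d + (D (Suc t) - D t)" if "i < n" for i t
    using step[OF that, of t] res[OF that, of t] by (simp add: D_def)
  have Xs: "int (Xout (Suc t)) = Fside n d c 0 (D (Suc t)) - Fside n d c 0 (D t)" for t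
  proof -
    have "int (Xout (Suc t)) = (\<Sum>i<n. of_bool (d \<le> \<alpha> i (Suc t)))"
    proof -
      have "{..<n} \<inter> {i. d \<le> \<alpha> i (Suc t)} = {i. i < n \<and> d \<le> \<alpha> i (Suc t)}" by auto
      then show ?thesis by (simp add: Xdef)
    qed
    also have "\<dots> = (\<Sum>i<n. (c i + D (Suc t)) div int d - (c i + D t) div int d)"
    proof (rule sum.cong[OF refl])
      fix i assume "i \<in> {..<n}"
      then have i: "i < n" by simp
      have v: "int (\<alpha> i (Suc t)) = (c i + D t) mod int d + int (Yin t)"
        using val[OF i, of t] by (simp add: D_def)
      have e1: "(d \<le> \<alpha> i (Suc t)) = (int d \<le> (c i + D t) mod int d + int (Yin t))"
        unfolding v[symmetric] by simp
      have w: "(if int d \<le> (c i + D t) mod int d + int (Yin t) then 1 else 0) =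
            (c i + D t + int (Yin t)) div int d - (c i + D t) div int d"
        by (rule wrap_count) (use d Yle in auto)
      have "of_bool (d \<le> \<alpha> i (Suc t)) = (if int d \<le> (c i + D t) mod int d + int (Yin t) then 1 else (0::int))"
        using e1 by simp
      also have "\<dots> = (c i + D t + int (Yin t)) div int d - (c i + D t) div int d" by (rule w)
      also have "c i + D t + int (Yin t) = c i + D (Suc t)" by (simp add: D_def)
      finally show "of_bool (d \<le> \<alpha> i (Suc t)) = (c i + D (Suc t)) div int d - (c i + D t) div int d" .
    qed
    also have "\<dots> = Fside n d c 0 (D (Suc t)) - Fside n d c 0 (D t)"
      by (simp add: Fside_def sum_subtractf)
    finally show ?thesis .
  qed
  show "(\<Sum>s<Suc t. int (Xout s)) = Fside n d c (int (Xout 0)) (D t)" for t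
  proof (induction t)
    case 0
    have "c i div int d = 0" for i using d by (simp add: c_def zdiv_int[symmetric] zmod_int[symmetric])
    then show ?case by (simp add: Fside_def D_def)
  next
    case (Suc t)
    have "(\<Sum>s<Suc (Suc t). int (Xout s)) = (\<Sum>s<Suc t. int (Xout s)) + int (Xout (Suc t))" by simp
    also have "\<dots> = Fside n d c (int (Xout 0)) (D (Suc t))"
      using Suc Xs[of t] by (simp add: Fside_def)
    finally show ?case .
  qed
qed




lemma bounded_core:
  fixes \<alpha> \<beta> :: "nat \<Rightarrow> nat \<Rightarrow> nat" and a b P :: nat and X Y :: "nat \<Rightarrow> nat"
  assumes a: "a > 0" and b: "b > 0" and P: "P > 0"
    and Xdef: "\<And>t. X t = card {i. i < a \<and> b \<le> \<alpha> i t}"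
    and Ydef: "\<And>t. Y t = card {j. j < b \<and> a \<le> \<beta> j t}"
    and stepA: "\<And>i t. i < a \<Longrightarrow> \<alpha> i (Suc t) = \<alpha> i t mod b + Y t"
    and stepB: "\<And>j t. j < b \<Longrightarrow> \<beta> j (Suc t) = \<beta> j t mod a + X t"
    and perA: "\<And>t. \<alpha> 0 (t + P) = \<alpha> 0 t"
  shows "\<exists>k. 0 < k \<and> k \<le> a \<and> k \<le> b \<and> (\<forall>t\<ge>2. (\<forall>i<a. \<alpha> i (t + 2*k) = \<alpha> i t) \<and> (\<forall>j<b. \<beta> j (t + 2*k) = \<beta> j t))"
proof -
  have Yle: "Y t \<le> b" for t
  proof -
    have "card {j. j < b \<and> a \<le> \<beta> j t} \<le> card {..<b}" by (rule card_mono) auto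
    then show ?thesis by (simp add: Ydef)
  qed
  have Xle: "X t \<le> a" for t
  proof -
    have "card {i. i < a \<and> b \<le> \<alpha> i t} \<le> card {..<a}" by (rule card_mono) auto
    then show ?thesis by (simp add: Xdef)
  qed
  define DA where "DA = (\<lambda>t. (\<Sum>s<t. int (Y s)))"
  define DB where "DB = (\<lambda>t. (\<Sum>s<t. int (X s)))"
  define cA where "cA = (\<lambda>i. int (\<alpha> i 0 mod b))"
  define cB where "cB = (\<lambda>j. int (\<beta> j 0 mod a))"
  define FA where "FA = Fside a b cA (int (X 0))"
  define FB where "FB = Fside b a cB (int (Y 0))"
  define G where "G = (\<lambda>z. FB (FA z))"
  note SA = side_D[of b Y a \<alpha> X, OF b Yle stepA Xdef]
  note SB = side_D[of a X b \<beta> Y, OF a Xle stepB Ydef]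
  have resA: "int (\<alpha> i t mod b) = (cA i + DA t) mod int b" if "i < a" for i t
    using SA(1)[of i t] that unfolding cA_def DA_def by simp
  have valA: "int (\<alpha> i (Suc t)) = (cA i + DA t) mod int b + (DA (Suc t) - DA t)" if "i < a" for i t
    using SA(2)[of i t] that unfolding cA_def DA_def by simp
  have valB: "int (\<beta> j (Suc t)) = (cB j + DB t) mod int a + (DB (Suc t) - DB t)" if "j < b" for j t
    using SB(2)[of j t] that unfolding cB_def DB_def by simp
  have DBs: "DB (Suc t) = FA (DA t)" for t
    using SA(3)[of t] unfolding cA_def DA_def DB_def FA_def by simp
  have DAs: "DA (Suc t) = FB (DB t)" for t
    using SB(3)[of t] unfolding cB_def DA_def DB_def FB_def by simp
  have mA: "mono FA" unfolding FA_def using b by (rule Fside_mono)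
  have mB: "mono FB" unfolding FB_def using a by (rule Fside_mono)
  have sA: "FA (z + int b) = FA z + int a" for z unfolding FA_def using b by (rule Fside_shift)
  have sB: "FB (z + int a) = FB z + int b" for z unfolding FB_def using a by (rule Fside_shift)
  have DA2: "DA (Suc (Suc t)) = G (DA t)" for t using DAs DBs by (simp add: G_def)
  have DAn: "DA (t + 2 * n) = (G ^^ n) (DA t)" for t n
  proof (induction n)
    case 0 then show ?case by simp
  next
    case (Suc n)
    have "DA (t + 2 * Suc n) = DA (Suc (Suc (t + 2 * n)))" by simp
    also have "\<dots> = G (DA (t + 2 * n))" by (rule DA2)
    finally show ?case using Suc by simp
  qed
  have per2: "\<alpha> 0 (t + 2 * P) = \<alpha> 0 t" for t
    using perA[of "t + P"] perA[of t] by (simp add: mult_2 add.assoc)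
  have perG: "\<exists>M. (G ^^ P) (DA t) = DA t + M * int b" for t
  proof -
    have "(cA 0 + DA (t + 2 * P)) mod int b = (cA 0 + DA t) mod int b"
      using resA[OF a, of "t + 2*P"] resA[OF a, of t] per2[of t] by simp
    then have "(DA (t + 2 * P) - DA t) mod int b = 0" by (simp add: mod_eq_dvd_iff)
    then have "int b dvd (DA (t + 2 * P) - DA t)" by (simp add: mod_eq_0_iff_dvd)
    then obtain M where "DA (t + 2 * P) - DA t = int b * M" by (auto simp: dvd_def)
    then show ?thesis using DAn[of t P] by (intro exI[of _ M]) (simp add: algebra_simps)
  qed
  obtain M1 where M1: "(G ^^ P) (DA 0) = DA 0 + M1 * int b" using perG by blast
  obtain M2 where M2: "(G ^^ P) (DA 1) = DA 1 + M2 * int b" using perG by blast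
  obtain k m where k: "0 < k" "k \<le> a" "k \<le> b" and ku: "(G ^^ k) (DA 0) = DA 0 + m * int b"
      and kw: "(G ^^ k) (DA 1) = DA 1 + m * int b"
    using orbit_bound[of FA FB b a G P "DA 0" M1 "DA 1" M2] mA mB sA sB a b P M1 M2 by (auto simp: G_def)
  have Gsh: "(G ^^ n) (z + m * int b) = (G ^^ n) z + m * int b" for n z
    by (rule funpow_shift) (simp add: G_def sA sB)
  have DAper: "DA (t + 2 * k) = DA t + m * int b" for t
  proof -
    define r where "r = t mod 2"
    define s where "s = t div 2"
    have t: "t = r + 2 * s" by (simp add: r_def s_def)
    have r: "r = 0 \<or> r = 1" by (auto simp: r_def)
    have kr: "(G ^^ k) (DA r) = DA r + m * int b" using r ku kw by auto
    have "DA (t + 2 * k) = DA (r + 2 * (k + s))" by (simp add: t algebra_simps)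
    also have "\<dots> = (G ^^ (s + k)) (DA r)" using DAn[of r "k + s"] by (simp add: add.commute)
    also have "\<dots> = (G ^^ s) ((G ^^ k) (DA r))" by (simp add: funpow_add)
    also have "\<dots> = (G ^^ s) (DA r) + m * int b" by (simp add: kr Gsh)
    also have "(G ^^ s) (DA r) = DA t" by (simp add: t DAn)
    finally show ?thesis .
  qed
  have DBper: "DB (Suc t + 2 * k) = DB (Suc t) + m * int a" for t
  proof -
    have "DB (Suc t + 2 * k) = FA (DA (t + 2 * k))" using DBs[of "t + 2*k"] by simp
    also have "\<dots> = FA (DA t) + m * int a" using DAper shift_gen[of FA "int b" "int a", OF sA] by simp
    finally show ?thesis using DBs by simp
  qed
  have Aper: "\<alpha> i (Suc t + 2 * k) = \<alpha> i (Suc t)" if "i < a" for i t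
  proof -
    have "int (\<alpha> i (Suc (t + 2 * k))) = (cA i + DA (t + 2*k)) mod int b + (DA (Suc t + 2 * k) - DA (t + 2 * k))"
      using valA[OF that, of "t + 2*k"] by simp
    also have "\<dots> = (cA i + DA t + m * int b) mod int b + (DA (Suc t) - DA t)"
      using DAper[of t] DAper[of "Suc t"] by (simp add: algebra_simps)
    also have "\<dots> = int (\<alpha> i (Suc t))" using valA[OF that, of t] by simp
    finally show ?thesis by simp
  qed
  have Bper: "\<beta> j (Suc (Suc t) + 2 * k) = \<beta> j (Suc (Suc t))" if "j < b" for j t
  proof -
    have "int (\<beta> j (Suc (Suc t + 2 * k))) = (cB j + DB (Suc t + 2*k)) mod int a + (DB (Suc (Suc t + 2 * k)) - DB (Suc t + 2 * k))"
      using valB[OF that, of "Suc t + 2*k"] by simp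
    also have "\<dots> = (cB j + DB (Suc t) + m * int a) mod int a + (DB (Suc (Suc t)) - DB (Suc t))"
      using DBper[of t] DBper[of "Suc t"] by (simp add: algebra_simps)
    also have "\<dots> = int (\<beta> j (Suc (Suc t)))" using valB[OF that, of "Suc t"] by simp
    finally show ?thesis by simp
  qed
  have "\<forall>t\<ge>2. (\<forall>i<a. \<alpha> i (t + 2*k) = \<alpha> i t) \<and> (\<forall>j<b. \<beta> j (t + 2*k) = \<beta> j t)"
  proof (intro allI impI conjI)
    fix t :: nat and i j assume t: "2 \<le> t"
    then obtain t' where t': "t = Suc (Suc t')" by (metis add_2_eq_Suc le_Suc_ex)
    show "\<alpha> i (t + 2*k) = \<alpha> i t" if "i < a" using Aper[OF that, of "Suc t'"] t' by simp
    show "\<beta> j (t + 2*k) = \<beta> j t" if "j < b" using Bper[OF that, of t'] t' by simp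
  qed
  then show ?thesis using k by blast
qed




lemma deg_Inl: "deg (Kab_V a b) Kab_E (Inl i) = b"
proof -
  have "{u \<in> Kab_V a b. Kab_E (Inl i) u} = Inr ` {..<b}"
    by (auto simp: Kab_V_def Kab_E_def)
  then show ?thesis by (simp add: deg_def card_image)
qed

lemma deg_Inr: "deg (Kab_V a b) Kab_E (Inr j) = a"
proof -
  have "{u \<in> Kab_V a b. Kab_E (Inr j) u} = Inl ` {..<a}"
    by (auto simp: Kab_V_def Kab_E_def)
  then show ?thesis by (simp add: deg_def card_image)
qed

lemma cf_Inl:
  assumes "i < a"
  shows "cf_step (Kab_V a b) Kab_E \<sigma> (Inl i) =
    \<sigma> (Inl i) - (if b \<le> \<sigma> (Inl i) then b else 0) + card {j. j < b \<and> a \<le> \<sigma> (Inr j)}"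
proof -
  have "{u \<in> Kab_V a b. Kab_E u (Inl i) \<and> deg (Kab_V a b) Kab_E u \<le> \<sigma> u} = Inr ` {j. j < b \<and> a \<le> \<sigma> (Inr j)}"
    using deg_Inr[of a b] by (auto simp: Kab_V_def Kab_E_def)
  moreover have "Inl i \<in> Kab_V a b" using assms by (simp add: Kab_V_def)
  ultimately show ?thesis by (simp add: cf_step_def deg_Inl card_image)
qed

lemma cf_Inr:
  assumes "j < b"
  shows "cf_step (Kab_V a b) Kab_E \<sigma> (Inr j) =
    \<sigma> (Inr j) - (if a \<le> \<sigma> (Inr j) then a else 0) + card {i. i < a \<and> b \<le> \<sigma> (Inl i)}"
proof -
  have "{u \<in> Kab_V a b. Kab_E u (Inr j) \<and> deg (Kab_V a b) Kab_E u \<le> \<sigma> u} = Inl ` {i. i < a \<and> b \<le> \<sigma> (Inl i)}"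
    using deg_Inl[of a b] by (auto simp: Kab_V_def Kab_E_def)
  moreover have "Inr j \<in> Kab_V a b" using assms by (simp add: Kab_V_def)
  ultimately show ?thesis by (simp add: cf_step_def deg_Inr card_image)
qed

lemma cf_out: "v \<notin> Kab_V a b \<Longrightarrow> cf_step (Kab_V a b) Kab_E \<sigma> v = \<sigma> v"
  by (simp add: cf_step_def)

lemma Kab_cases:
  fixes v :: "nat + nat" and a b :: nat
  obtains i where "v = Inl i" "i < a" | j where "v = Inr j" "j < b" | "v \<notin> Kab_V a b"
  by (cases v) (auto simp: Kab_V_def)

lemma always_fire:
  fixes f Y :: "nat \<Rightarrow> nat"
  assumes step: "\<And>n. f (Suc n) = f n - (if d \<le> f n then d else 0) + Y n"
    and Yle: "\<And>n. Y n \<le> d" and fire: "\<And>n. n < p \<Longrightarrow> d \<le> f n" and per: "f p = f 0"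
  shows "\<And>n. n < p \<Longrightarrow> Y n = d"
proof -
  have diff: "int (f (Suc n)) - int (f n) = int (Y n) - int d" if "n < p" for n
    using step[of n] fire[OF that] by simp
  have "(\<Sum>n<p. int (f (Suc n)) - int (f n)) = int (f p) - int (f 0)"
    by (rule sum_lessThan_telescope)
  also have "(\<Sum>n<p. int (f (Suc n)) - int (f n)) = (\<Sum>n<p. int (Y n) - int d)"
    by (rule sum.cong) (simp_all add: diff)
  finally have "(\<Sum>n<p. int d - int (Y n)) = 0" using per by (simp add: sum_subtractf)
  moreover have "\<forall>n\<in>{..<p}. 0 \<le> int d - int (Y n)" using Yle by simp
  ultimately have "\<forall>n\<in>{..<p}. int d - int (Y n) = 0" using sum_nonneg_eq_0_iff[of "{..<p}" "\<lambda>n. int d - int (Y n)"] by simp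
  then show "\<And>n. n < p \<Longrightarrow> Y n = d" by simp
qed

lemma card_full:
  assumes "card {j. j < b \<and> P j} = b" "j < b"
  shows "P j"
proof -
  have "{j. j < b \<and> P j} = {..<b}"
    by (rule card_subset_eq) (use assms in auto)
  then show ?thesis using assms by auto
qed

lemma bounded_step:
  fixes f Y :: "nat \<Rightarrow> nat"
  assumes step: "\<And>n. f (Suc n) = f n - (if d \<le> f n then d else 0) + Y n"
    and Yle: "\<And>n. Y n \<le> d" and low: "f t < d"
  shows "f (t + Suc m) < 2 * d"
proof (induction m)
  case 0 then show ?case using step[of t] low Yle[of t] by simp
next
  case (Suc m) then show ?case using step[of "t + Suc m"] Yle[of "t + Suc m"] by auto
qed




lemma mod_sub_lemma: "(x::nat) < 2 * b \<Longrightarrow> x - (if b \<le> x then b else 0) = x mod b"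
  by (auto simp: le_mod_geq)

lemma member_lemma:
  fixes p k m :: nat
  assumes "p dvd 2 * k" "0 < k" "k \<le> m" "0 < p"
  shows "p \<in> {i. 1 \<le> i \<and> i \<le> m} \<union> {2 * i | i. 1 \<le> i \<and> i \<le> m}"
proof (cases "even p")
  case True
  then obtain i where p: "p = 2 * i" by blast
  then have "i dvd k" using assms(1) by simp
  then have "i \<le> k" using assms(2) by (simp add: dvd_imp_le)
  moreover have "1 \<le> i" using p assms(4) by simp
  ultimately show ?thesis using p assms(3) by auto
next
  case False
  then have "coprime p 2" by (simp add: coprime_commute)
  then have "p dvd k" using assms(1) coprime_dvd_mult_right_iff by blast
  then have "p \<le> k" using assms(2) by (simp add: dvd_imp_le)
  then show ?thesis using assms by auto
qed

lemma necessity: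
  assumes a: "0 < a" and b: "0 < b" and per: "is_period (Kab_V a b) Kab_E \<sigma> p"
  shows "p \<in> {i. 1 \<le> i \<and> i \<le> min a b} \<union> {2 * i | i. 1 \<le> i \<and> i \<le> min a b}"
proof -
  let ?T = "cf_step (Kab_V a b) Kab_E"
  from per have p: "0 < p" and minim: "\<And>q. 0 < q \<Longrightarrow> q < p \<Longrightarrow> \<not> eventual_period (Kab_V a b) Kab_E \<sigma> q"
    unfolding is_period_def eventual_period_def by auto
  from per obtain t0 where H: "\<And>t. t \<ge> t0 \<Longrightarrow> (?T ^^ (t + p)) \<sigma> = (?T ^^ t) \<sigma>"
    unfolding is_period_def eventual_period_def by auto
  define s where "s n = (?T ^^ (t0 + n)) \<sigma>" for n
  have sSuc: "s (Suc n) = ?T (s n)" for n by (simp add: s_def)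
  have sp: "s (n + p) = s n" for n using H[of "t0 + n"] by (simp add: s_def add.assoc)
  have spc: "s (n + p * c) = s n" for n c
  proof (induction c)
    case 0 then show ?case by simp
  next
    case (Suc c)
    have "s (n + p * Suc c) = s ((n + p * c) + p)" by (simp add: algebra_simps)
    then show ?case using sp Suc by simp
  qed
  have shiftper: "s (n + N) = s n" if "s N = s 0" for n N
  proof (induction n)
    case 0 then show ?case using that by simp
  next
    case (Suc n) then show ?case using sSuc[of "n + N"] sSuc[of n] by simp
  qed
  have pdvd: "p dvd N" if sN: "s N = s 0" for N
  proof (rule ccontr)
    assume nd: "\<not> p dvd N"
    define r where "r = N mod p"
    have r: "0 < r" "r < p" using nd p by (auto simp: r_def mod_greater_zero_iff_not_dvd)
    have "s r = s (r + p * (N div p))" by (rule spc[symmetric])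
    also have "r + p * (N div p) = N" by (simp add: r_def)
    finally have sr: "s r = s 0" using sN by simp
    have "eventual_period (Kab_V a b) Kab_E \<sigma> r"
      unfolding eventual_period_def
    proof (intro conjI exI allI impI)
      show "0 < r" by (rule r(1))
      fix t assume "t0 \<le> t"
      then obtain n where t: "t = t0 + n" using le_Suc_ex by blast
      have "(?T ^^ (t + r)) \<sigma> = s (n + r)" by (simp add: s_def t add.assoc)
      also have "\<dots> = s n" by (rule shiftper[OF sr])
      finally show "(?T ^^ (t + r)) \<sigma> = (?T ^^ t) \<sigma>" by (simp add: s_def t)
    qed
    then show False using minim r by blast
  qed
  define Y where "Y n = card {j. j < b \<and> a \<le> s n (Inr j)}" for n
  define X where "X n = card {i. i < a \<and> b \<le> s n (Inl i)}" for n
  have stepL: "s (Suc n) (Inl i) = s n (Inl i) - (if b \<le> s n (Inl i) then b else 0) + Y n" if "i < a" for i n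
    using cf_Inl[OF that] by (simp add: sSuc Y_def)
  have stepR: "s (Suc n) (Inr j) = s n (Inr j) - (if a \<le> s n (Inr j) then a else 0) + X n" if "j < b" for j n
    using cf_Inr[OF that] by (simp add: sSuc X_def)
  have stepO: "s n v = s 0 v" if "v \<notin> Kab_V a b" for v n
    by (induction n) (simp_all add: sSuc cf_out[OF that])
  have Yle: "Y n \<le> b" for n
  proof -
    have "card {j. j < b \<and> a \<le> s n (Inr j)} \<le> card {..<b}" by (rule card_mono) auto
    then show ?thesis by (simp add: Y_def)
  qed
  have Xle: "X n \<le> a" for n
  proof -
    have "card {i. i < a \<and> b \<le> s n (Inl i)} \<le> card {..<a}" by (rule card_mono) auto
    then show ?thesis by (simp add: X_def)
  qed
  have PA: "\<forall>n<p. \<forall>j<b. a \<le> s n (Inr j)" if i: "i < a" and f: "\<forall>n<p. b \<le> s n (Inl i)" for i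
  proof (intro allI impI)
    fix n j assume n: "n < p" and j: "j < b"
    have "Y n = b"
      using always_fire[of "\<lambda>n. s n (Inl i)" b Y p, OF stepL[OF i] Yle] f sp[of 0] n by simp
    then show "a \<le> s n (Inr j)" using card_full[of b "\<lambda>j. a \<le> s n (Inr j)" j] j by (simp add: Y_def)
  qed
  have PB: "\<forall>n<p. \<forall>i<a. b \<le> s n (Inl i)" if j: "j < b" and f: "\<forall>n<p. a \<le> s n (Inr j)" for j
  proof (intro allI impI)
    fix n i assume n: "n < p" and i: "i < a"
    have "X n = a"
      using always_fire[of "\<lambda>n. s n (Inr j)" a X p, OF stepR[OF j] Xle] f sp[of 0] n by simp
    then show "b \<le> s n (Inl i)" using card_full[of a "\<lambda>i. b \<le> s n (Inl i)" i] i by (simp add: X_def)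
  qed
  have allfire: "p = 1" if fA: "\<forall>n<p. \<forall>i<a. b \<le> s n (Inl i)" and fB: "\<forall>n<p. \<forall>j<b. a \<le> s n (Inr j)"
  proof -
    have "{i. i < a \<and> b \<le> s 0 (Inl i)} = {..<a}" using fA p by auto
    then have X0: "X 0 = a" by (simp add: X_def)
    have "{j. j < b \<and> a \<le> s 0 (Inr j)} = {..<b}" using fB p by auto
    then have Y0: "Y 0 = b" by (simp add: Y_def)
    have "s 1 = s 0"
    proof
      fix v show "s 1 v = s 0 v"
      proof (cases rule: Kab_cases[where a=a and b=b and v=v])
        case (1 i)
        have "b \<le> s 0 (Inl i)" using fA p 1 by blast
        then show ?thesis using stepL[OF 1(2), of 0] Y0 1(1) by simp
      next
        case (2 j)
        have "a \<le> s 0 (Inr j)" using fB p 2 by blast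
        then show ?thesis using stepR[OF 2(2), of 0] X0 2(1) by simp
      next
        case 3 then show ?thesis using stepO[OF 3, of 1] by simp
      qed
    qed
    then have "p dvd 1" by (rule pdvd)
    then show ?thesis by simp
  qed
  show ?thesis
  proof (cases "(\<exists>i<a. \<forall>n<p. b \<le> s n (Inl i)) \<or> (\<exists>j<b. \<forall>n<p. a \<le> s n (Inr j))")
    case True
    have fB: "\<forall>n<p. \<forall>j<b. a \<le> s n (Inr j)"
    proof (cases "\<exists>i<a. \<forall>n<p. b \<le> s n (Inl i)")
      case True then obtain i where "i < a" "\<forall>n<p. b \<le> s n (Inl i)" by blast
      then show ?thesis by (rule PA)
    next
      case False
      with True obtain j where j: "j < b" "\<forall>n<p. a \<le> s n (Inr j)" by blast
      have "\<forall>n<p. \<forall>i<a. b \<le> s n (Inl i)" using PB[OF j] .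
      then show ?thesis using PA[OF a] by blast
    qed
    have fA: "\<forall>n<p. \<forall>i<a. b \<le> s n (Inl i)"
    proof (rule PB[of 0])
      show "0 < b" by (fact b)
      show "\<forall>n<p. a \<le> s n (Inr 0)" using fB b by blast
    qed
    have "p = 1" using allfire fA fB by blast
    then show ?thesis using a b by auto
  next
    case False
    have bA: "s m (Inl i) < 2 * b" if "i < a" "p \<le> m" for i m
    proof -
      have "\<exists>n<p. \<not> b \<le> s n (Inl i)" using False that(1) by blast
      then obtain n where n: "n < p" "s n (Inl i) < b" by (auto simp: not_le)
      have eq: "n + Suc (m - n - 1) = m" using n that by simp
      have "s (n + Suc (m - n - 1)) (Inl i) < 2 * b"
        using bounded_step[of "\<lambda>n. s n (Inl i)" b Y n "m - n - 1", OF stepL[OF that(1)] Yle n(2)] by simp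
      then show ?thesis by (simp only: eq)
    qed
    have bB: "s m (Inr j) < 2 * a" if "j < b" "p \<le> m" for j m
    proof -
      have "\<exists>n<p. \<not> a \<le> s n (Inr j)" using False that(1) by blast
      then obtain n where n: "n < p" "s n (Inr j) < a" by (auto simp: not_le)
      have eq: "n + Suc (m - n - 1) = m" using n that by simp
      have "s (n + Suc (m - n - 1)) (Inr j) < 2 * a"
        using bounded_step[of "\<lambda>n. s n (Inr j)" a X n "m - n - 1", OF stepR[OF that(1)] Xle n(2)] by simp
      then show ?thesis by (simp only: eq)
    qed
    define \<alpha> where "\<alpha> i n = s (p + n) (Inl i)" for i n
    define \<beta> where "\<beta> j n = s (p + n) (Inr j)" for j n
    obtain k where k: "0 < k" "k \<le> a" "k \<le> b"
      and kper: "\<forall>t\<ge>2. (\<forall>i<a. \<alpha> i (t + 2*k) = \<alpha> i t) \<and> (\<forall>j<b. \<beta> j (t + 2*k) = \<beta> j t)"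
    proof -
      have "\<exists>k. 0 < k \<and> k \<le> a \<and> k \<le> b \<and> (\<forall>t\<ge>2. (\<forall>i<a. \<alpha> i (t + 2*k) = \<alpha> i t) \<and> (\<forall>j<b. \<beta> j (t + 2*k) = \<beta> j t))"
      proof (rule bounded_core[of a b p "\<lambda>n. X (p + n)" \<alpha> "\<lambda>n. Y (p + n)" \<beta>])
        show "0 < a" "0 < b" "0 < p" by (fact a, fact b, fact p)
        show "X (p + t) = card {i. i < a \<and> b \<le> \<alpha> i t}" for t by (simp add: X_def \<alpha>_def)
        show "Y (p + t) = card {j. j < b \<and> a \<le> \<beta> j t}" for t by (simp add: Y_def \<beta>_def)
        show "\<alpha> i (Suc t) = \<alpha> i t mod b + Y (p + t)" if "i < a" for i t
          using stepL[OF that, of "p + t"] mod_sub_lemma[OF bA[OF that, of "p + t"]] by (simp add: \<alpha>_def)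
        show "\<beta> j (Suc t) = \<beta> j t mod a + X (p + t)" if "j < b" for j t
          using stepR[OF that, of "p + t"] mod_sub_lemma[OF bB[OF that, of "p + t"]] by (simp add: \<beta>_def)
        show "\<alpha> 0 (t + p) = \<alpha> 0 t" for t using sp[of "p + t"] by (simp add: \<alpha>_def add.assoc)
      qed
      then show ?thesis using that by blast
    qed
    have base: "s (p + 2 + 2 * k) = s (p + 2)"
    proof
      fix v show "s (p + 2 + 2 * k) v = s (p + 2) v"
      proof (cases rule: Kab_cases[where a=a and b=b and v=v])
        case (1 i) then show ?thesis using kper by (auto simp: \<alpha>_def add.assoc)
      next
        case (2 j) then show ?thesis using kper by (auto simp: \<beta>_def add.assoc)
      next
        case 3 then show ?thesis using stepO[OF 3, of "p + 2 + 2 * k"] stepO[OF 3, of "p + 2"] by simp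
      qed
    qed
    have gen: "s (p + 2 + m + 2 * k) = s (p + 2 + m)" for m
    proof (induction m)
      case 0 then show ?case using base by simp
    next
      case (Suc m) then show ?case using sSuc[of "p + 2 + m + 2 * k"] sSuc[of "p + 2 + m"] by simp
    qed
    define N where "N = p * (p + 2)"
    have N: "p + 2 \<le> N"
    proof -
      have "1 * (p + 2) \<le> p * (p + 2)" using p by (intro mult_right_mono) auto
      then show ?thesis by (simp add: N_def)
    qed
    define M where "M = N - (p + 2)"
    have NM: "N = p + 2 + M" using N by (simp add: M_def)
    have "s (2 * k) = s (2 * k + p * (p + 2))" by (rule spc[symmetric])
    also have "2 * k + p * (p + 2) = p + 2 + M + 2 * k" using NM by (simp add: N_def)
    also have "s (p + 2 + M + 2 * k) = s (p + 2 + M)" by (rule gen)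
    also have "p + 2 + M = 0 + p * (p + 2)" using NM by (simp add: N_def)
    also have "s (0 + p * (p + 2)) = s 0" by (rule spc)
    finally have "p dvd 2 * k" by (rule pdvd)
    then show ?thesis using member_lemma[of p k "min a b"] k p by simp
  qed
qed




definition gp :: "nat \<Rightarrow> nat \<Rightarrow> nat" where "gp d i = (if i < d then i else 0)"
definition sz :: "nat \<Rightarrow> nat \<Rightarrow> nat \<Rightarrow> nat" where "sz n d h = (if h = 0 then n - d + 1 else 1)"
definition tau :: "nat \<Rightarrow> nat \<Rightarrow> nat \<Rightarrow> nat" where "tau P phi t = (t + P - phi) mod P"
definition cnt :: "nat \<Rightarrow> nat \<Rightarrow> nat \<Rightarrow> nat" where "cnt e d x = (if x = 0 then d else x div e)"
definition wsum :: "(nat \<Rightarrow> nat) \<Rightarrow> nat \<Rightarrow> nat \<Rightarrow> nat \<Rightarrow> nat" where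
  "wsum s d g c = (\<Sum>k<c. s ((g + k) mod d))"

lemma wsum_Suc: "wsum s d g (Suc c) = wsum s d g c + s ((g + c) mod d)"
  by (simp add: wsum_def)

lemma wsum_rot:
  assumes d: "d > 0"
  shows "wsum s d g d = (\<Sum>k<d. s k)"
proof -
  let ?f = "\<lambda>k. (g + k) mod d"
  have inj: "inj_on ?f {..<d}"
  proof (rule inj_onI)
    fix x y assume x: "x \<in> {..<d}" and y: "y \<in> {..<d}" and e: "(g + x) mod d = (g + y) mod d"
    have "int (g + x) mod int d = int (g + y) mod int d" using e by (metis zmod_int)
    then have "int d dvd int (g + x) - int (g + y)" by (simp only: mod_eq_dvd_iff)
    then have "int d dvd int x - int y" by simp
    then have "int x mod int d = int y mod int d" by (simp only: mod_eq_dvd_iff[symmetric])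
    then show "x = y" using x y by simp
  qed
  have im: "?f ` {..<d} = {..<d}"
    by (rule endo_inj_surj) (use inj d in auto)
  have "(\<Sum>k<d. s k) = (\<Sum>k\<in>?f ` {..<d}. s k)" using im by simp
  also have "\<dots> = (\<Sum>k<d. s (?f k))" using sum.reindex[OF inj, of s] by simp
  finally show ?thesis by (simp add: wsum_def)
qed

lemma sz_sum:
  assumes "1 \<le> d" "d \<le> n"
  shows "(\<Sum>k<d. sz n d k) = n"
proof -
  obtain m where d: "d = Suc m" using assms by (cases d) auto
  have "(\<Sum>k<d. sz n d k) = sz n d 0 + (\<Sum>k<m. sz n d (Suc k))"
    unfolding d by (rule sum.lessThan_Suc_shift)
  also have "\<dots> = n - d + 1 + m" by (simp add: sz_def)
  finally show ?thesis using assms d by simp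
qed

lemma sz_pos: "d \<le> n \<Longrightarrow> 1 \<le> sz n d k"
  by (simp add: sz_def)

lemma wsum_partial:
  assumes c: "c < d" and pos: "\<And>k. 1 \<le> s k"
  shows "wsum s d g c < wsum s d g d"
proof -
  have "wsum s d g d = (\<Sum>k\<in>{0..<c}. s ((g + k) mod d)) + (\<Sum>k\<in>{c..<d}. s ((g + k) mod d))"
    unfolding wsum_def atLeast0LessThan[symmetric] using c by (simp add: sum.atLeastLessThan_concat)
  moreover have "(\<Sum>k\<in>{c..<d}. s ((g + k) mod d)) \<ge> (\<Sum>k\<in>{c..<d}. 1)"
    by (rule sum_mono) (use pos in auto)
  moreover have "(\<Sum>k\<in>{c..<d}. (1::nat)) \<ge> 1" using c by simp
  ultimately show ?thesis unfolding wsum_def atLeast0LessThan[symmetric] by linarith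
qed

lemma vstep:
  assumes e: "e = 1 \<or> e = 2" and d: "d > 0" and pos: "\<And>k. 1 \<le> s k"
    and dg: "dg = (\<Sum>k<d. s k)" and x: "x < e * d"
  shows "wsum s d g (cnt e d x) - (if dg \<le> wsum s d g (cnt e d x) then dg else 0)
           + (if x mod e = e - 1 then s ((g + x div e) mod d) else 0)
         = wsum s d g (cnt e d ((x + 1) mod (e * d)))"
    and "dg \<le> wsum s d g (cnt e d x) \<longleftrightarrow> x = 0"
proof -
  have tot: "wsum s d g d = dg" using wsum_rot[OF d] dg by simp
  have xd: "x div e < d" using x e by (auto simp: less_mult_imp_div_less)
  have fire: "dg \<le> wsum s d g (cnt e d x) \<longleftrightarrow> x = 0"
  proof (cases "x = 0")
    case True then show ?thesis using tot by (simp add: cnt_def)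
  next
    case False
    then have "wsum s d g (cnt e d x) < dg" using wsum_partial[of "x div e" d s g, OF xd pos] tot by (simp add: cnt_def)
    then show ?thesis using False by simp
  qed
  then show "dg \<le> wsum s d g (cnt e d x) \<longleftrightarrow> x = 0" .
  have lhs1: "wsum s d g (cnt e d x) - (if dg \<le> wsum s d g (cnt e d x) then dg else 0) = wsum s d g (x div e)"
    using fire tot by (cases "x = 0") (simp_all add: cnt_def wsum_def)
  have c1: "cnt e d ((x + 1) mod (e * d)) = (x + 1) div e"
  proof (cases "x + 1 = e * d")
    case True then show ?thesis using d e by (auto simp: cnt_def)
  next
    case False
    then have "x + 1 < e * d" using x by simp
    then show ?thesis using e by (auto simp: cnt_def)
  qed
  have c2: "(x + 1) div e = x div e + (if x mod e = e - 1 then 1 else 0)"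
    using e by (auto; presburger)
  show "wsum s d g (cnt e d x) - (if dg \<le> wsum s d g (cnt e d x) then dg else 0)
           + (if x mod e = e - 1 then s ((g + x div e) mod d) else 0)
         = wsum s d g (cnt e d ((x + 1) mod (e * d)))"
    unfolding lhs1 c1 c2 by (simp add: wsum_Suc)
qed

lemma tau_Suc: "phi \<le> P \<Longrightarrow> tau P phi (Suc t) = (tau P phi t + 1) mod P"
proof -
  assume "phi \<le> P"
  then have "Suc t + P - phi = Suc (t + P - phi)" by simp
  then show ?thesis by (simp add: tau_def mod_Suc_eq)
qed

lemma tau_add: "phi \<le> P \<Longrightarrow> (phi + tau P phi t) mod P = t mod P"
proof -
  assume ph: "phi \<le> P"
  have "(phi + tau P phi t) mod P = (phi + (t + P - phi)) mod P" by (simp add: tau_def mod_add_right_eq)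
  also have "phi + (t + P - phi) = t + P" using ph by simp
  finally show ?thesis by simp
qed

lemma tau_lt: "P > 0 \<Longrightarrow> tau P phi t < P" by (simp add: tau_def)

lemma tau_zero:
  assumes ph: "phi < P"
  shows "tau P phi t = 0 \<longleftrightarrow> t mod P = phi"
proof -
  have P: "P > 0" using ph by simp
  have a: "(phi + tau P phi t) mod P = t mod P" using tau_add[of phi P t] ph by simp
  have l: "tau P phi t < P" using tau_lt[OF P] .
  show ?thesis
  proof
    assume "tau P phi t = 0"
    moreover have "phi mod P = phi" using ph by simp
    ultimately show "t mod P = phi" using a by simp
  next
    assume t: "t mod P = phi"
    show "tau P phi t = 0"
    proof (rule ccontr)
      assume nz: "tau P phi t \<noteq> 0"
      show False
      proof (cases "phi + tau P phi t < P")
        case True then show False using a t nz by simp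
      next
        case False
        then have "(phi + tau P phi t) mod P = phi + tau P phi t - P"
          using l ph by (simp add: le_mod_geq)
        then show False using a t l False by linarith
      qed
    qed
  qed
qed

lemma tau_per: "phi \<le> P \<Longrightarrow> tau P phi (t + P) = tau P phi t"
proof -
  assume "phi \<le> P"
  then have "t + P + P - phi = (t + P - phi) + P" by simp
  then show ?thesis by (simp add: tau_def)
qed

lemma dec: "(e::nat) > 0 \<Longrightarrow> (e * g + x) mod (e * d) = e * ((g + x div e) mod d) + x mod e"
proof -
  assume e: "e > 0"
  have "(e * g + x) mod (e * d) = e * ((e * g + x) div e mod d) + (e * g + x) mod e"
    using mod_mult2_eq[of "e * g + x" e d] by simp
  moreover have "(e * g + x) div e = g + x div e" using e by simp
  moreover have "(e * g + x) mod e = x mod e" by simp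
  ultimately show ?thesis by simp
qed

lemma eq_dec:
  assumes "c1 < e" "c2 < (e::nat)"
  shows "e * h1 + c1 = e * h2 + c2 \<longleftrightarrow> h1 = h2 \<and> c1 = c2"
proof
  assume eq: "e * h1 + c1 = e * h2 + c2"
  have "(e * h1 + c1) div e = h1" "(e * h2 + c2) div e = h2" using assms by simp_all
  moreover have "(e * h1 + c1) mod e = c1" "(e * h2 + c2) mod e = c2" using assms by simp_all
  ultimately show "h1 = h2 \<and> c1 = c2" using eq by simp
qed simp

lemma card_gp:
  assumes h: "h < d" and dn: "d \<le> n"
  shows "card {j. j < n \<and> gp d j = h} = sz n d h"
proof (cases "h = 0")
  case True
  have "{j. j < n \<and> gp d j = h} = insert 0 {d..<n}" using True h dn by (auto simp: gp_def)
  moreover have "0 \<notin> {d..<n}" using h by simp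
  ultimately show ?thesis using True dn h by (simp add: sz_def)
next
  case False
  have "{j. j < n \<and> gp d j = h} = {h}" using False h dn by (auto simp: gp_def)
  then show ?thesis using False by (simp add: sz_def)
qed

lemma gp_lt: "0 < d \<Longrightarrow> gp d j < d" by (simp add: gp_def)

lemma inA:
  assumes e: "e = 1 \<or> e = 2" and d: "0 < d" "d \<le> b" and g: "g < d"
  shows "card {j. j < b \<and> tau (e * d) (e * gp d j + (e - 1)) t = 0}
       = (if tau (e * d) (e * g) t mod e = e - 1 then sz b d ((g + tau (e * d) (e * g) t div e) mod d) else 0)"
proof -
  let ?x = "tau (e * d) (e * g) t"
  have e0: "e > 0" using e by auto
  have gle: "e * g \<le> e * d" using g by simp
  have tm: "t mod (e * d) = e * ((g + ?x div e) mod d) + ?x mod e"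
    using tau_add[OF gle, of t] dec[OF e0, of g ?x d] by simp
  have phl: "e * gp d j + (e - 1) < e * d" for j
  proof -
    have "gp d j + 1 \<le> d" using gp_lt[OF d(1)] by (simp add: Suc_le_eq)
    then have "e * (gp d j + 1) \<le> e * d" by (rule mult_le_mono2)
    then show ?thesis using e0 by (simp add: algebra_simps)
  qed
  have cond: "tau (e * d) (e * gp d j + (e - 1)) t = 0 \<longleftrightarrow> (gp d j = (g + ?x div e) mod d \<and> ?x mod e = e - 1)" for j
  proof -
    have "tau (e * d) (e * gp d j + (e - 1)) t = 0 \<longleftrightarrow> e * ((g + ?x div e) mod d) + ?x mod e = e * gp d j + (e - 1)"
      using tau_zero[OF phl[of j]] tm by simp
    also have "\<dots> \<longleftrightarrow> ((g + ?x div e) mod d = gp d j \<and> ?x mod e = e - 1)"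
      by (rule eq_dec) (use e0 in simp_all)
    finally show ?thesis by auto
  qed
  show ?thesis
  proof (cases "?x mod e = e - 1")
    case True
    have "{j. j < b \<and> tau (e * d) (e * gp d j + (e - 1)) t = 0} = {j. j < b \<and> gp d j = (g + ?x div e) mod d}"
      using cond True by auto
    then show ?thesis using True card_gp[of "(g + ?x div e) mod d" d b] d by simp
  next
    case False
    then have "{j. j < b \<and> tau (e * d) (e * gp d j + (e - 1)) t = 0} = {}" using cond by auto
    then show ?thesis using False by simp
  qed
qed

lemma ym_lemma:
  fixes x e :: nat
  assumes "e = 1 \<or> e = 2"
  shows "(e - 1 + x) mod e = 0 \<longleftrightarrow> x mod e = e - 1"
    and "x mod e = e - 1 \<Longrightarrow> (e - 1 + x) div e = (e - 1) + x div e"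
  using assms by (auto; presburger)+

lemma inB:
  assumes e: "e = 1 \<or> e = 2" and d: "0 < d" "d \<le> a" and g: "g < d"
  shows "card {i. i < a \<and> tau (e * d) (e * gp d i) t = 0}
       = (if tau (e * d) (e * g + (e - 1)) t mod e = e - 1 then sz a d ((g + (e - 1) + tau (e * d) (e * g + (e - 1)) t div e) mod d) else 0)"
proof -
  let ?x = "tau (e * d) (e * g + (e - 1)) t"
  let ?y = "e - 1 + ?x"
  have e0: "e > 0" using e by auto
  have gle: "e * g + (e - 1) \<le> e * d"
  proof -
    have "g + 1 \<le> d" using g by simp
    then have "e * (g + 1) \<le> e * d" by (rule mult_le_mono2)
    then have "e * g + e \<le> e * d" by (simp only: distrib_left mult_1_right)
    then show ?thesis by (simp only: le_diff_conv2)
  qed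
  have h1: "(e * g + (e - 1) + ?x) mod (e * d) = t mod (e * d)" by (rule tau_add[OF gle])
  have h2: "e * g + (e - 1) + ?x = e * g + ?y" by (simp only: add.assoc)
  have tm: "t mod (e * d) = e * ((g + ?y div e) mod d) + ?y mod e"
  proof -
    have "t mod (e * d) = (e * g + ?y) mod (e * d)" using h1 unfolding h2 by simp
    also have "\<dots> = e * ((g + ?y div e) mod d) + ?y mod e" by (rule dec[OF e0])
    finally show ?thesis .
  qed
  have phl: "e * gp d i < e * d" for i using gp_lt[OF d(1)] e0 by simp
  have ym: "?y mod e = 0 \<longleftrightarrow> ?x mod e = e - 1" by (rule ym_lemma(1)[OF e])
  have yd: "?x mod e = e - 1 \<Longrightarrow> ?y div e = (e - 1) + ?x div e" by (rule ym_lemma(2)[OF e])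
  have cond: "tau (e * d) (e * gp d i) t = 0 \<longleftrightarrow> ((g + ?y div e) mod d = gp d i \<and> ?y mod e = 0)" for i
  proof -
    have "tau (e * d) (e * gp d i) t = 0 \<longleftrightarrow> t mod (e * d) = e * gp d i" by (rule tau_zero[OF phl[of i]])
    also have "\<dots> \<longleftrightarrow> e * ((g + ?y div e) mod d) + ?y mod e = e * gp d i + 0" by (simp only: tm add_0_right)
    also have "\<dots> \<longleftrightarrow> ((g + ?y div e) mod d = gp d i \<and> ?y mod e = 0)"
      by (rule eq_dec) (use e0 in simp_all)
    finally show ?thesis .
  qed
  show ?thesis
  proof (cases "?x mod e = e - 1")
    case True
    have eqy: "(g + ?y div e) mod d = (g + (e - 1) + ?x div e) mod d" using yd[OF True] by (simp add: add.assoc)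
    have ym1: "?y mod e = 0" using ym True by simp
    have cond': "tau (e * d) (e * gp d i) t = 0 \<longleftrightarrow> (g + (e - 1) + ?x div e) mod d = gp d i" for i
      using cond[of i] ym1 eqy by simp
    have "{i. i < a \<and> tau (e * d) (e * gp d i) t = 0} = {i. i < a \<and> gp d i = (g + (e - 1) + ?x div e) mod d}"
    proof -
      have "{i. i < a \<and> tau (e * d) (e * gp d i) t = 0} = {i. i < a \<and> (g + (e - 1) + ?x div e) mod d = gp d i}"
        using cond' by simp
      also have "\<dots> = {i. i < a \<and> gp d i = (g + (e - 1) + ?x div e) mod d}" by auto
      finally show ?thesis .
    qed
    then show ?thesis using True card_gp[of "(g + (e - 1) + ?x div e) mod d" d a] d by simp
  next
    case False
    then have "{i. i < a \<and> tau (e * d) (e * gp d i) t = 0} = {}" using cond ym by auto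
    then show ?thesis using False by simp
  qed
qed


definition conf :: "nat \<Rightarrow> nat \<Rightarrow> nat \<Rightarrow> nat \<Rightarrow> nat \<Rightarrow> nat + nat \<Rightarrow> nat" where
  "conf a b d e t v = (case v of
      Inl i \<Rightarrow> if i < a then wsum (sz b d) d (gp d i) (cnt e d (tau (e * d) (e * gp d i) t)) else 0
    | Inr j \<Rightarrow> if j < b then wsum (sz a d) d (gp d j + (e - 1)) (cnt e d (tau (e * d) (e * gp d j + (e - 1)) t)) else 0)"

lemma conf_step:
  assumes e: "e = 1 \<or> e = 2" and d: "1 \<le> d" "d \<le> a" "d \<le> b"
  shows "cf_step (Kab_V a b) Kab_E (conf a b d e t) = conf a b d e (Suc t)"
proof
  fix v
  have d0: "0 < d" using d by simp
  have e0: "0 < e" using e by auto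
  have posA: "\<And>k. 1 \<le> sz a d k" using sz_pos[OF d(2)] .
  have posB: "\<And>k. 1 \<le> sz b d k" using sz_pos[OF d(3)] .
  have degA: "a = (\<Sum>k<d. sz a d k)" using sz_sum[OF d(1) d(2)] by simp
  have degB: "b = (\<Sum>k<d. sz b d k)" using sz_sum[OF d(1) d(3)] by simp
  have phA: "e * gp d i \<le> e * d" for i using gp_lt[OF d0, of i] by simp
  have phB: "e * gp d j + (e - 1) \<le> e * d" for j
  proof -
    have "gp d j + 1 \<le> d" using gp_lt[OF d0, of j] by simp
    then have "e * (gp d j + 1) \<le> e * d" by (rule mult_le_mono2)
    then have "e * gp d j + e \<le> e * d" by (simp only: distrib_left mult_1_right)
    then show ?thesis by (simp only: le_diff_conv2)
  qed
  have P0: "0 < e * d" using e0 d0 by simp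
  have fireB: "a \<le> conf a b d e t (Inr j) \<longleftrightarrow> tau (e * d) (e * gp d j + (e - 1)) t = 0" if "j < b" for j
    using vstep(2)[OF e d0 posA degA tau_lt[OF P0]] that by (simp add: conf_def)
  have fireA: "b \<le> conf a b d e t (Inl i) \<longleftrightarrow> tau (e * d) (e * gp d i) t = 0" if "i < a" for i
    using vstep(2)[OF e d0 posB degB tau_lt[OF P0]] that by (simp add: conf_def)
  show "cf_step (Kab_V a b) Kab_E (conf a b d e t) v = conf a b d e (Suc t) v"
  proof (cases rule: Kab_cases[where a=a and b=b and v=v])
    case (1 i)
    let ?g = "gp d i"
    let ?x = "tau (e * d) (e * ?g) t"
    have "card {j. j < b \<and> a \<le> conf a b d e t (Inr j)} = card {j. j < b \<and> tau (e * d) (e * gp d j + (e - 1)) t = 0}"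
      by (intro arg_cong[where f=card] Collect_cong) (use fireB in auto)
    also have "\<dots> = (if ?x mod e = e - 1 then sz b d ((?g + ?x div e) mod d) else 0)"
      by (rule inA[OF e d0 d(3) gp_lt[OF d0]])
    finally have inp: "card {j. j < b \<and> a \<le> conf a b d e t (Inr j)} = (if ?x mod e = e - 1 then sz b d ((?g + ?x div e) mod d) else 0)" .
    have cv: "conf a b d e t (Inl i) = wsum (sz b d) d ?g (cnt e d ?x)" using 1 by (simp add: conf_def)
    have cv': "conf a b d e (Suc t) (Inl i) = wsum (sz b d) d ?g (cnt e d ((?x + 1) mod (e * d)))"
      using 1 tau_Suc[OF phA[of i]] by (simp add: conf_def)
    show ?thesis
      unfolding 1(1) cf_Inl[OF 1(2)] inp cv cv'
      by (rule vstep(1)[OF e d0 posB degB tau_lt[OF P0]])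
  next
    case (2 j)
    let ?g = "gp d j + (e - 1)"
    let ?x = "tau (e * d) (e * gp d j + (e - 1)) t"
    have "card {i. i < a \<and> b \<le> conf a b d e t (Inl i)} = card {i. i < a \<and> tau (e * d) (e * gp d i) t = 0}"
      by (intro arg_cong[where f=card] Collect_cong) (use fireA in auto)
    also have "\<dots> = (if ?x mod e = e - 1 then sz a d ((?g + ?x div e) mod d) else 0)"
      by (rule inB[OF e d0 d(2) gp_lt[OF d0]])
    finally have inp: "card {i. i < a \<and> b \<le> conf a b d e t (Inl i)} = (if ?x mod e = e - 1 then sz a d ((?g + ?x div e) mod d) else 0)" .
    have cv: "conf a b d e t (Inr j) = wsum (sz a d) d ?g (cnt e d ?x)" using 2 by (simp add: conf_def)
    have cv': "conf a b d e (Suc t) (Inr j) = wsum (sz a d) d ?g (cnt e d ((?x + 1) mod (e * d)))"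
      using 2 tau_Suc[OF phB[of j]] by (simp add: conf_def)
    show ?thesis
      unfolding 2(1) cf_Inr[OF 2(2)] inp cv cv'
      by (rule vstep(1)[OF e d0 posA degA tau_lt[OF P0]])
  next
    case 3
    have "conf a b d e t' v = 0" for t'
      using 3 by (cases v) (auto simp: conf_def Kab_V_def)
    then have "conf a b d e t v = 0" "conf a b d e (Suc t) v = 0" by blast+
    then show ?thesis using cf_out[OF 3] by simp
  qed
qed

lemma conf_per:
  assumes e: "e = 1 \<or> e = 2" and d: "1 \<le> d"
  shows "conf a b d e (t + e * d) = conf a b d e t"
proof
  fix v
  have d0: "0 < d" using d by simp
  have phA: "e * gp d i \<le> e * d" for i using gp_lt[OF d0, of i] by simp
  have phB: "e * gp d j + (e - 1) \<le> e * d" for j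
  proof -
    have "gp d j + 1 \<le> d" using gp_lt[OF d0, of j] by simp
    then have "e * (gp d j + 1) \<le> e * d" by (rule mult_le_mono2)
    then have "e * gp d j + e \<le> e * d" by (simp only: distrib_left mult_1_right)
    then show ?thesis by (simp only: le_diff_conv2)
  qed
  show "conf a b d e (t + e * d) v = conf a b d e t v"
  proof (cases v)
    case (Inl i) show ?thesis unfolding conf_def Inl sum.case using tau_per[OF phA[of i], of t] by (simp only:)
  next
    case (Inr j) show ?thesis unfolding conf_def Inr sum.case using tau_per[OF phB[of j], of t] by (simp only:)
  qed
qed

lemma conf_distinct:
  assumes e: "e = 1 \<or> e = 2" and d: "1 \<le> d" "d \<le> b" and a: "0 < a"
    and k: "0 < k" "k < e * d"
  shows "conf a b d e k \<noteq> conf a b d e 0"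
proof
  assume eq: "conf a b d e k = conf a b d e 0"
  have d0: "0 < d" using d by simp
  have P0: "0 < e * d" using e d0 by auto
  have posB: "\<And>k. 1 \<le> sz b d k" using sz_pos[OF d(2)] .
  have degB: "b = (\<Sum>k<d. sz b d k)" using sz_sum[OF d(1) d(2)] by simp
  have g0: "gp d 0 = 0" using d0 by (simp add: gp_def)
  have t0: "tau (e * d) 0 0 = 0" by (simp add: tau_def)
  have tk: "tau (e * d) 0 k = k" using k by (simp add: tau_def)
  have c: "conf a b d e t (Inl 0) = wsum (sz b d) d 0 (cnt e d (tau (e * d) 0 t))" for t
    using a g0 by (simp add: conf_def)
  have h: "b \<le> wsum (sz b d) d 0 (cnt e d (tau (e * d) 0 t)) \<longleftrightarrow> tau (e * d) 0 t = 0" for t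
    by (rule vstep(2)[OF e d0 posB degB tau_lt[OF P0]])
  have "b \<le> conf a b d e 0 (Inl 0)" using c[of 0] h[of 0] t0 by simp
  moreover have "\<not> b \<le> conf a b d e k (Inl 0)" using c[of k] h[of k] tk k by simp
  ultimately show False using eq by simp
qed




lemma sufficiency:
  assumes a: "0 < a" and b: "0 < b" and e: "e = 1 \<or> e = 2" and d: "1 \<le> d" "d \<le> a" "d \<le> b"
  shows "\<exists>\<sigma> :: nat + nat \<Rightarrow> nat. (\<forall>v. v \<notin> Kab_V a b \<longrightarrow> \<sigma> v = 0) \<and> is_period (Kab_V a b) Kab_E \<sigma> (e * d)"
proof (intro exI conjI allI impI)
  let ?T = "cf_step (Kab_V a b) Kab_E"
  let ?\<sigma> = "conf a b d e 0"
  show "?\<sigma> v = 0" if "v \<notin> Kab_V a b" for v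
    using that by (cases v) (auto simp: conf_def Kab_V_def)
  have it: "(?T ^^ t) ?\<sigma> = conf a b d e t" for t
    by (induction t) (simp_all add: conf_step[OF e d])
  have P0: "0 < e * d" using e d by auto
  have perc: "conf a b d e (x + e * d * c) = conf a b d e x" for x c
  proof (induction c)
    case 0 then show ?case by simp
  next
    case (Suc c)
    have "conf a b d e (x + e * d * Suc c) = conf a b d e ((x + e * d * c) + e * d)" by (simp add: algebra_simps)
    also have "\<dots> = conf a b d e (x + e * d * c)" by (rule conf_per[OF e d(1)])
    finally show ?case using Suc by simp
  qed
  show "is_period (Kab_V a b) Kab_E ?\<sigma> (e * d)"
    unfolding is_period_def
  proof (intro conjI allI impI)
    show "eventual_period (Kab_V a b) Kab_E ?\<sigma> (e * d)"
      unfolding eventual_period_def using P0 by (auto simp: it conf_per[OF e d(1)])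
    fix q assume q: "0 < q \<and> q < e * d"
    show "\<not> eventual_period (Kab_V a b) Kab_E ?\<sigma> q"
    proof
      assume "eventual_period (Kab_V a b) Kab_E ?\<sigma> q"
      then obtain t1 where t1: "\<And>t. t \<ge> t1 \<Longrightarrow> (?T ^^ (t + q)) ?\<sigma> = (?T ^^ t) ?\<sigma>"
        unfolding eventual_period_def by auto
      have ge: "t1 \<le> e * d * t1" using P0 by simp
      have "conf a b d e (e * d * t1 + q) = conf a b d e (e * d * t1)" using t1[OF ge] by (simp add: it)
      then have "conf a b d e q = conf a b d e 0" using perc[of q t1] perc[of 0 t1] by (simp add: add.commute)
      then show False using conf_distinct[OF e d(1) d(3) a] q by blast
    qed
  qed
qed

theorem theorem3p8:
  fixes a b p :: nat
  assumes "0 < a" and "0 < b" and "0 < p"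
  shows "(\<exists>\<sigma> :: nat + nat \<Rightarrow> nat. (\<forall>v. v \<notin> Kab_V a b \<longrightarrow> \<sigma> v = 0) \<and>
            is_period (Kab_V a b) Kab_E \<sigma> p)
         \<longleftrightarrow> p \<in> {i. 1 \<le> i \<and> i \<le> min a b} \<union> {2 * i | i. 1 \<le> i \<and> i \<le> min a b}"
proof
  assume "\<exists>\<sigma> :: nat + nat \<Rightarrow> nat. (\<forall>v. v \<notin> Kab_V a b \<longrightarrow> \<sigma> v = 0) \<and> is_period (Kab_V a b) Kab_E \<sigma> p"
  then obtain \<sigma> :: "nat + nat \<Rightarrow> nat" where "is_period (Kab_V a b) Kab_E \<sigma> p" by blast
  then show "p \<in> {i. 1 \<le> i \<and> i \<le> min a b} \<union> {2 * i | i. 1 \<le> i \<and> i \<le> min a b}"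
    using necessity assms by blast
next
  assume "p \<in> {i. 1 \<le> i \<and> i \<le> min a b} \<union> {2 * i | i. 1 \<le> i \<and> i \<le> min a b}"
  then consider "1 \<le> p" "p \<le> min a b" | i where "p = 2 * i" "1 \<le> i" "i \<le> min a b" by blast
  then show "\<exists>\<sigma> :: nat + nat \<Rightarrow> nat. (\<forall>v. v \<notin> Kab_V a b \<longrightarrow> \<sigma> v = 0) \<and> is_period (Kab_V a b) Kab_E \<sigma> p"
  proof cases
    case 1 then show ?thesis using sufficiency[of a b 1 p] assms by simp
  next
    case (2 i) then show ?thesis using sufficiency[of a b 2 i] assms by simp
  qed
qed



end
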